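(* Let $\mathcal{G}$ be a finite weighted coloured--edge graph with $n\ge2$ vertices and $k$ colours such that for every ordered pair of vertices $(x,y)$ and every colour $c$ there is at most one edge from $x$ to $y$ of colour $c$. Then for any vertices $u\ne v$, the number of minimal paths from $u$ to $v$ (counting all of them, including distinct paths with equal weight vectors) is at most $k(k+1)^{n-2}$.
   Context: A weighted coloured--edge graph $\mathcal{G}=\langle V,E,\omega,\lambda\rangle$ consists of a directed multigraph with vertex set $V$ and edge set $E$ (each edge $e$ has an initial vertex and a distinct terminal vertex), a weight function $\omega:E\to\mathbb{R}^+$ (strictly positive reals), and a surjective colour function $\lambda:E\to M$ onto a set $M$ of colours; $k=|M|$. A path from $u$ to $v$ is a sequence of edges $e_1,\dots,e_l$ ($l\ge1$) such that the initial vertex of $e_1$ is $u$, the terminal vertex of $e_l$ is $v$, the terminal vertex of $e_i$ is the initial vertex of $e_{i+1}$, and no vertex is visited twice. For a path $p$ and colour $c$, $\omega_c(p)$ is the sum of $\omega(e)$ over edges $e$ of $p$ with $\lambda(e)=c$. For paths $p,q$ from $u$ to $v$, $p\le q$ means $\omega_c(p)\le\omega_c(q)$ for all $c\in M$. A path $p$ from $u$ to $v$ is minimal if there is no path $q$ from $u$ to $v$ with $q\le p$ and $\omega_c(q)<\omega_c(p)$ for some colour $c$. *)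

theory Defs
  imports Complex_Main
begin

definition wc_graph ::
  "'v set \<Rightarrow> 'e set \<Rightarrow> ('e \<Rightarrow> 'v) \<Rightarrow> ('e \<Rightarrow> 'v) \<Rightarrow> ('e \<Rightarrow> real) \<Rightarrow> ('e \<Rightarrow> 'c) \<Rightarrow> 'c set \<Rightarrow> bool"
where
  "wc_graph V E src tgt w col M \<longleftrightarrow>
     (\<forall>e\<in>E. src e \<in> V \<and> tgt e \<in> V \<and> src e \<noteq> tgt e \<and> w e > 0) \<and> col ` E = M"

definition finite_wc_graph ::
  "'v set \<Rightarrow> 'e set \<Rightarrow> ('e \<Rightarrow> 'v) \<Rightarrow> ('e \<Rightarrow> 'v) \<Rightarrow> ('e \<Rightarrow> real) \<Rightarrow> ('e \<Rightarrow> 'c) \<Rightarrow> 'c set \<Rightarrow> bool"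
where
  "finite_wc_graph V E src tgt w col M \<longleftrightarrow> wc_graph V E src tgt w col M \<and> finite V \<and> finite E"

definition is_path ::
  "'e set \<Rightarrow> ('e \<Rightarrow> 'v) \<Rightarrow> ('e \<Rightarrow> 'v) \<Rightarrow> 'v \<Rightarrow> 'v \<Rightarrow> 'e list \<Rightarrow> bool"
where
  "is_path E src tgt u v p \<longleftrightarrow>
     p \<noteq> [] \<and> set p \<subseteq> E \<and> src (hd p) = u \<and> tgt (last p) = v \<and>
     (\<forall>i. Suc i < length p \<longrightarrow> tgt (p ! i) = src (p ! Suc i)) \<and>
     distinct (src (hd p) # map tgt p)"

definition colour_weight :: "('e \<Rightarrow> real) \<Rightarrow> ('e \<Rightarrow> 'c) \<Rightarrow> 'c \<Rightarrow> 'e list \<Rightarrow> real"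
where
  "colour_weight w col c p = sum_list (map w (filter (\<lambda>e. col e = c) p))"

definition path_le :: "('e \<Rightarrow> real) \<Rightarrow> ('e \<Rightarrow> 'c) \<Rightarrow> 'c set \<Rightarrow> 'e list \<Rightarrow> 'e list \<Rightarrow> bool"
where
  "path_le w col M p q \<longleftrightarrow> (\<forall>c\<in>M. colour_weight w col c p \<le> colour_weight w col c q)"

definition minimal_path ::
  "'e set \<Rightarrow> ('e \<Rightarrow> 'v) \<Rightarrow> ('e \<Rightarrow> 'v) \<Rightarrow> ('e \<Rightarrow> real) \<Rightarrow> ('e \<Rightarrow> 'c) \<Rightarrow> 'c set \<Rightarrow> 'v \<Rightarrow> 'v \<Rightarrow> 'e list \<Rightarrow> bool"
where
  "minimal_path E src tgt w col M u v p \<longleftrightarrow>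
     is_path E src tgt u v p \<and>
     \<not> (\<exists>q. is_path E src tgt u v q \<and> path_le w col M q p \<and>
            (\<exists>c\<in>M. colour_weight w col c q < colour_weight w col c p))"

end

theory Submission
  imports Defs "HOL-Library.FuncSet"
begin

lemma path_iff: "is_path E src tgt u v p \<longleftrightarrow> p \<noteq> [] \<and> set p \<subseteq> E \<and> src (hd p) = u \<and> tgt (last p) = v
   \<and> successively (\<lambda>a b. tgt a = src b) p \<and> distinct (u # map tgt p)"
  unfolding is_path_def successively_conv_nth by auto

lemma path_prefix: "is_path E src tgt u v (xs @ ys) \<Longrightarrow> xs \<noteq> [] \<Longrightarrow> is_path E src tgt u (tgt (last xs)) xs"
  by (auto simp: path_iff successively_append_iff)

lemma path_snoc: "is_path E src tgt u x xs \<Longrightarrow> e \<in> E \<Longrightarrow> src e = x \<Longrightarrow> tgt e \<notin> insert u (tgt ` set xs)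
   \<Longrightarrow> is_path E src tgt u (tgt e) (xs @ [e])"
  by (auto simp: path_iff successively_append_iff)

lemma path_single: "e \<in> E \<Longrightarrow> src e = u \<Longrightarrow> tgt e \<noteq> u \<Longrightarrow> is_path E src tgt u (tgt e) [e]"
  by (auto simp: path_iff)

lemma cw_append: "colour_weight w col c (xs @ ys) = colour_weight w col c xs + colour_weight w col c ys"
  by (simp add: colour_weight_def)

lemma cw_single: "colour_weight w col c [e] = (if col e = c then w e else 0)"
  by (simp add: colour_weight_def)

lemma split_at_tgt: "z \<in> tgt ` set q \<Longrightarrow> \<exists>xs ys. q = xs @ ys \<and> xs \<noteq> [] \<and> tgt (last xs) = z"
proof -
  assume "z \<in> tgt ` set q"
  then obtain e where "e \<in> set q" "tgt e = z" by auto
  then obtain as bs where "q = as @ e # bs" by (auto simp: in_set_conv_decomp)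
  then show ?thesis using \<open>tgt e = z\<close> by (intro exI[of _ "as @ [e]"] exI[of _ bs]) auto
qed

locale cg =
  fixes E :: "'e set" and src tgt :: "'e \<Rightarrow> 'v" and w :: "'e \<Rightarrow> real" and col :: "'e \<Rightarrow> 'c" and M
  assumes pos: "\<And>e. e \<in> E \<Longrightarrow> w e > 0"
    and srctgt: "\<And>e. e \<in> E \<Longrightarrow> src e \<noteq> tgt e"
    and uniq: "\<And>e e'. e \<in> E \<Longrightarrow> e' \<in> E \<Longrightarrow> src e = src e' \<Longrightarrow> tgt e = tgt e' \<Longrightarrow> col e = col e' \<Longrightarrow> e = e'"
    and MM: "col ` E = M"
begin

lemma cw_nonneg: "set xs \<subseteq> E \<Longrightarrow> 0 \<le> colour_weight w col c xs"
  unfolding colour_weight_def by (rule sum_list_nonneg) (auto dest: pos intro: less_imp_le)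

lemma cw_ge: "e \<in> set xs \<Longrightarrow> set xs \<subseteq> E \<Longrightarrow> w e \<le> colour_weight w col (col e) xs"
proof (induction xs)
  case Nil then show ?case by simp
next
  case (Cons a xs)
  have "colour_weight w col (col e) (a # xs) = colour_weight w col (col e) [a] + colour_weight w col (col e) xs"
    using cw_append[of w col "col e" "[a]" xs] by simp
  moreover have "0 \<le> colour_weight w col (col e) xs" using Cons.prems by (intro cw_nonneg) auto
  moreover have "0 \<le> colour_weight w col (col e) [a]" using Cons.prems by (intro cw_nonneg) auto
  ultimately show ?case using Cons by (auto simp: cw_single)
qed

lemma dominate:
  assumes "set (qa @ qb @ [e']) \<subseteq> E" "e \<in> E" "col e = col e'" "w e \<le> w e'" "qb \<noteq> []"
  shows "path_le w col M (qa @ [e]) (qa @ qb @ [e']) \<and>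
    (\<exists>c\<in>M. colour_weight w col c (qa @ [e]) < colour_weight w col c (qa @ qb @ [e']))"
proof -
  have le: "colour_weight w col c [e] \<le> colour_weight w col c [e']" for c
    using assms by (auto simp: cw_single)
  have nn: "0 \<le> colour_weight w col c qb" for c using assms by (intro cw_nonneg) auto
  have all: "colour_weight w col c (qa @ [e]) \<le> colour_weight w col c (qa @ qb @ [e'])" for c
    using le[of c] nn[of c] by (simp add: cw_append)
  have h: "hd qb \<in> set qb" using assms by simp
  have hE: "hd qb \<in> E" using assms h by auto
  have "w (hd qb) \<le> colour_weight w col (col (hd qb)) qb" using h assms by (intro cw_ge) auto
  moreover have "w (hd qb) > 0" using hE pos by auto
  moreover have cM: "col (hd qb) \<in> M" using hE MM by auto
  ultimately have "colour_weight w col (col (hd qb)) (qa @ [e]) < colour_weight w col (col (hd qb)) (qa @ qb @ [e'])"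
    using le[of "col (hd qb)"] by (simp add: cw_append)
  then show ?thesis using cM all by (auto simp: path_le_def)
qed

lemma prefix_minimal:
  assumes m: "minimal_path E src tgt w col M u v (p1 @ [e])" and ne: "p1 \<noteq> []"
  shows "minimal_path E src tgt w col M u (src e) p1"
proof -
  have P: "is_path E src tgt u v (p1 @ [e])" using m by (simp add: minimal_path_def)
  hence "is_path E src tgt u (tgt (last p1)) p1" using ne by (rule path_prefix)
  moreover have "tgt (last p1) = src e" using P ne by (auto simp: path_iff successively_append_iff)
  ultimately have P1: "is_path E src tgt u (src e) p1" by simp
  have eE: "e \<in> E" and tv: "tgt e = v" and uv: "u \<noteq> v" and p1E: "set p1 \<subseteq> E"
    using P by (auto simp: path_iff)
  have cwp: "colour_weight w col c (p1 @ [e]) = colour_weight w col c p1 + colour_weight w col c [e]" for c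
    by (simp add: cw_append)
  have nne: "0 \<le> colour_weight w col c [e]" for c using eE by (intro cw_nonneg) auto
  show ?thesis unfolding minimal_path_def
  proof (intro conjI P1 notI)
    assume "\<exists>q. is_path E src tgt u (src e) q \<and> path_le w col M q p1 \<and>
            (\<exists>c\<in>M. colour_weight w col c q < colour_weight w col c p1)"
    then obtain q c where Q: "is_path E src tgt u (src e) q" and le: "path_le w col M q p1"
      and cM: "c \<in> M" and lt: "colour_weight w col c q < colour_weight w col c p1" by blast
    have qE: "set q \<subseteq> E" using Q by (auto simp: path_iff)
    have "\<exists>r. is_path E src tgt u v r \<and> path_le w col M r (p1 @ [e]) \<and>
            (\<exists>c\<in>M. colour_weight w col c r < colour_weight w col c (p1 @ [e]))"
    proof (cases "v \<in> tgt ` set q")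
      case False
      have "is_path E src tgt u (tgt e) (q @ [e])"
        using Q eE False tv uv by (intro path_snoc) auto
      hence R: "is_path E src tgt u v (q @ [e])" using tv by simp
      have A: "path_le w col M (q @ [e]) (p1 @ [e])"
        using le by (auto simp: path_le_def cw_append)
      have B: "colour_weight w col c (q @ [e]) < colour_weight w col c (p1 @ [e])"
        using lt by (simp add: cw_append)
      show ?thesis
        apply (rule exI[of _ "q @ [e]"]) apply (rule conjI, rule R, rule conjI, rule A) apply (rule bexI[where x=c]) apply (rule B) by (rule cM)
    next
      case True
      obtain qa qb where qs: "q = qa @ qb" "qa \<noteq> []" "tgt (last qa) = v"
        using split_at_tgt[OF True] by blast
      have R: "is_path E src tgt u v qa" using path_prefix[of E src tgt u "src e" qa qb] Q qs by simp
      have lq: "colour_weight w col c' qa \<le> colour_weight w col c' q" for c'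
        using qs qE cw_nonneg[of qb c'] by (simp add: cw_append)
      have A: "path_le w col M qa (p1 @ [e])"
        unfolding path_le_def cwp
      proof
        fix c' assume "c' \<in> M"
        then have "colour_weight w col c' q \<le> colour_weight w col c' p1" using le by (simp add: path_le_def)
        then show "colour_weight w col c' qa \<le> colour_weight w col c' p1 + colour_weight w col c' [e]"
          using lq[of c'] nne[of c'] by linarith
      qed
      have B: "colour_weight w col c qa < colour_weight w col c (p1 @ [e])"
        using lt lq[of c] nne[of c] unfolding cwp by linarith
      show ?thesis
        apply (rule exI[of _ qa]) apply (rule conjI, rule R, rule conjI, rule A) apply (rule bexI[where x=c]) apply (rule B) by (rule cM)
    qed
    then show False using m by (simp add: minimal_path_def)
  qed
qed

lemma shortcut:
  assumes Q: "is_path E src tgt u v (q1 @ [e'])" and eE: "e \<in> E" and tv: "tgt e = v"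
    and ne: "src e \<noteq> src e'" and x: "src e \<in> insert u (tgt ` set q1)"
    and cc: "col e = col e'" and ww: "w e \<le> w e'"
  shows "\<not> minimal_path E src tgt w col M u v (q1 @ [e'])"
proof -
  have qE: "set (q1 @ [e']) \<subseteq> E" and uv: "u \<noteq> v" and tv': "tgt e' = v"
    and vq: "v \<notin> tgt ` set q1" and uq: "u \<notin> tgt ` set q1"
    using Q by (auto simp: path_iff)
  have lastq: "q1 \<noteq> [] \<Longrightarrow> tgt (last q1) = src e'" using Q by (auto simp: path_iff successively_append_iff)
  have hdq: "q1 = [] \<Longrightarrow> src e' = u" using Q by (auto simp: path_iff)
  have hdq2: "q1 \<noteq> [] \<Longrightarrow> src (hd q1) = u" using Q by (auto simp: path_iff)
  obtain qa qb where qs: "q1 = qa @ qb" and qbne: "qb \<noteq> []" and R: "is_path E src tgt u v (qa @ [e])"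
  proof (cases "src e = u")
    case True
    have "q1 \<noteq> []" using True hdq ne by auto
    moreover have "is_path E src tgt u v ([] @ [e])" using path_single[of e E src u] eE True tv uv by auto
    ultimately show ?thesis using that[of "[]" q1] by auto
  next
    case False
    then have "src e \<in> tgt ` set q1" using x by auto
    then obtain qa qb where qs: "q1 = qa @ qb" "qa \<noteq> []" "tgt (last qa) = src e"
      using split_at_tgt[of "src e" tgt q1] by blast
    have "qb \<noteq> []" using qs lastq ne by auto
    moreover have "is_path E src tgt u (src e) qa"
      using path_prefix[of E src tgt u v qa "qb @ [e']"] Q qs by simp
    hence "is_path E src tgt u (tgt e) (qa @ [e])"
      using eE tv uv vq qs by (intro path_snoc) auto
    ultimately show ?thesis using that qs tv by auto
  qed
  have "path_le w col M (qa @ [e]) (qa @ qb @ [e']) \<and>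
    (\<exists>c\<in>M. colour_weight w col c (qa @ [e]) < colour_weight w col c (qa @ qb @ [e']))"
    using qE qs eE cc ww qbne by (intro dominate) auto
  then show ?thesis using R qs unfolding minimal_path_def by auto
qed

lemma path_src_last:
  assumes "is_path E src tgt u v (p1 @ [e])"
  shows "src e \<in> insert u (tgt ` set p1)" "p1 = [] \<Longrightarrow> src e = u" "p1 \<noteq> [] \<Longrightarrow> src e \<in> tgt ` set p1"
    "u \<notin> tgt ` set p1"
proof -
  have a: "p1 = [] \<Longrightarrow> src e = u" using assms by (auto simp: path_iff)
  have b: "p1 \<noteq> [] \<Longrightarrow> src e = tgt (last p1)"
    using assms by (auto simp: path_iff successively_append_iff)
  show "p1 = [] \<Longrightarrow> src e = u" by (rule a)
  show c: "p1 \<noteq> [] \<Longrightarrow> src e \<in> tgt ` set p1" using b by auto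
  show "src e \<in> insert u (tgt ` set p1)" using a c by (cases "p1 = []") auto
  show "u \<notin> tgt ` set p1" using assms by (auto simp: path_iff)
qed

lemma dom_L: "dom (map_of (map (\<lambda>e. (tgt e, col e)) p)) = tgt ` set p"
  by (simp add: dom_map_of_conv_image_fst image_image)

lemma L_snoc_other: "z \<noteq> tgt e \<Longrightarrow>
   map_of (map (\<lambda>e. (tgt e, col e)) (p1 @ [e])) z = map_of (map (\<lambda>e. (tgt e, col e)) p1) z"
  by (simp add: map_add_def split: option.split)

lemma L_notin: "z \<notin> tgt ` set p \<Longrightarrow> map_of (map (\<lambda>e. (tgt e, col e)) p) z = None"
  by (simp add: map_of_eq_None_iff image_image)

lemma L_snoc_last: "tgt e \<notin> tgt ` set p1 \<Longrightarrow>
   map_of (map (\<lambda>e. (tgt e, col e)) (p1 @ [e])) (tgt e) = Some (col e)"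
  using L_notin[of "tgt e" p1] by (simp add: map_add_def)

lemma inj_minimal:
  "minimal_path E src tgt w col M u v p \<Longrightarrow> minimal_path E src tgt w col M u v q \<Longrightarrow>
   map_of (map (\<lambda>e. (tgt e, col e)) p) = map_of (map (\<lambda>e. (tgt e, col e)) q) \<Longrightarrow> p = q"
proof (induction p arbitrary: v q rule: rev_induct)
  case Nil
  then show ?case by (simp add: minimal_path_def path_iff)
next
  case (snoc e p1)
  have P: "is_path E src tgt u v (p1 @ [e])" using snoc.prems by (simp add: minimal_path_def)
  have Q0: "is_path E src tgt u v q" using snoc.prems by (simp add: minimal_path_def)
  then have "q \<noteq> []" by (simp add: path_iff)
  then obtain q1 e' where qd: "q = q1 @ [e']" by (metis rev_exhaust)
  have Q: "is_path E src tgt u v (q1 @ [e'])" using Q0 qd by simp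
  have eE: "e \<in> E" "e' \<in> E" and tv: "tgt e = v" "tgt e' = v"
    and vp: "v \<notin> tgt ` set p1" and vq: "v \<notin> tgt ` set q1"
    using P Q by (auto simp: path_iff)
  have eq: "map_of (map (\<lambda>e. (tgt e, col e)) (p1 @ [e])) = map_of (map (\<lambda>e. (tgt e, col e)) (q1 @ [e']))"
    using snoc.prems qd by simp
  have "Some (col e) = Some (col e')"
    using L_snoc_last[of e p1] L_snoc_last[of e' q1] eq tv vp vq by simp
  hence cc: "col e = col e'" by simp
  have dd: "tgt ` set (p1 @ [e]) = tgt ` set (q1 @ [e'])"
    using dom_L[of "p1 @ [e]"] dom_L[of "q1 @ [e']"] eq by metis
  have sev: "src e \<noteq> v" "src e' \<noteq> v" using eE tv srctgt by metis+
  have xq: "src e \<in> insert u (tgt ` set q1)"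
    using path_src_last(1)[OF P] dd sev tv by auto
  have xp: "src e' \<in> insert u (tgt ` set p1)"
    using path_src_last(1)[OF Q] dd sev tv by auto
  show ?case
  proof (cases "src e = src e'")
    case False
    show ?thesis
    proof (cases "w e \<le> w e'")
      case True
      then have "\<not> minimal_path E src tgt w col M u v (q1 @ [e'])"
        using Q eE tv False xq cc by (intro shortcut) auto
      then show ?thesis using snoc.prems qd by simp
    next
      case ww: False
      then have "\<not> minimal_path E src tgt w col M u v (p1 @ [e])"
        using P eE tv False xp cc by (intro shortcut) auto
      then show ?thesis using snoc.prems by simp
    qed
  next
    case True
    then have ee: "e = e'" using uniq eE tv cc by auto
    show ?thesis
    proof (cases "p1 = []")
      case True
      then have "src e = u" using path_src_last(2)[OF P] by simp
      then have "q1 = []" using path_src_last(3,4)[OF Q] ee by auto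
      then show ?thesis using True qd ee by simp
    next
      case ne: False
      have "q1 \<noteq> []"
      proof
        assume "q1 = []"
        then have "src e = u" using path_src_last(2)[OF Q] ee by simp
        then show False using path_src_last(3,4)[OF P] ne by auto
      qed
      have m1: "minimal_path E src tgt w col M u (src e) p1"
        using snoc.prems(1) ne by (rule prefix_minimal)
      have m2: "minimal_path E src tgt w col M u (src e) q1"
        using snoc.prems(2) qd \<open>q1 \<noteq> []\<close> ee prefix_minimal by auto
      have "map_of (map (\<lambda>e. (tgt e, col e)) p1) = map_of (map (\<lambda>e. (tgt e, col e)) q1)"
      proof
        fix z show "map_of (map (\<lambda>e. (tgt e, col e)) p1) z = map_of (map (\<lambda>e. (tgt e, col e)) q1) z"
        proof (cases "z = v")
          case True then show ?thesis using L_notin vp vq by metis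
        next
          case False then show ?thesis
            using L_snoc_other[of z e p1] L_snoc_other[of z e' q1] eq tv by simp
        qed
      qed
      then have "p1 = q1" using snoc.IH[OF m1 m2] by simp
      then show ?thesis using qd ee by simp
    qed
  qed
qed

end

theorem theorem3:
  fixes V :: "'v set" and E :: "'e set" and src tgt :: "'e \<Rightarrow> 'v"
    and w :: "'e \<Rightarrow> real" and col :: "'e \<Rightarrow> 'c" and M :: "'c set"
    and u v :: 'v
  assumes "finite_wc_graph V E src tgt w col M"
    and "card V \<ge> 2"
    and "\<forall>e\<in>E. \<forall>e'\<in>E. src e = src e' \<and> tgt e = tgt e' \<and> col e = col e' \<longrightarrow> e = e'"
    and "u \<in> V" and "v \<in> V" and "u \<noteq> v"
  shows "card {p. minimal_path E src tgt w col M u v p} \<le> card M * (card M + 1) ^ (card V - 2)"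
proof -
  have G: "\<forall>e\<in>E. src e \<in> V \<and> tgt e \<in> V \<and> src e \<noteq> tgt e \<and> w e > 0" "col ` E = M"
    and fV: "finite V" and fE: "finite E"
    using assms(1) by (auto simp: finite_wc_graph_def wc_graph_def)
  interpret cg E src tgt w col M
    using G assms(3) by unfold_locales auto
  have fM: "finite M" using G(2) fE by auto
  define L where "L p = map_of (map (\<lambda>e. (tgt e, col e)) p)" for p :: "'e list"
  define \<Phi> where "\<Phi> p = restrict (L p) (V - {u})" for p
  define B where "B z = (if z = v then Some ` M else insert None (Some ` M))" for z
  let ?A = "{p. minimal_path E src tgt w col M u v p}"
  have Lout: "L p z = None" if "p \<in> ?A" "z \<notin> V - {u}" for p z
  proof -
    have P: "is_path E src tgt u v p" using that by (simp add: minimal_path_def)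
    have "z \<notin> tgt ` set p"
    proof
      assume "z \<in> tgt ` set p"
      then obtain e where "e \<in> set p" "z = tgt e" by auto
      moreover have "set p \<subseteq> E" "u \<notin> tgt ` set p" using P by (auto simp: path_iff)
      ultimately show False using that(2) G(1) by auto
    qed
    then show ?thesis unfolding L_def by (rule L_notin)
  qed
  have inj: "inj_on \<Phi> ?A"
  proof (rule inj_onI)
    fix p q assume p: "p \<in> ?A" and q: "q \<in> ?A" and eq: "\<Phi> p = \<Phi> q"
    have "L p = L q"
    proof
      fix z show "L p z = L q z"
      proof (cases "z \<in> V - {u}")
        case True
        then show ?thesis using eq unfolding \<Phi>_def by (metis restrict_apply')
      next
        case False
        then show ?thesis using Lout p q by simp
      qed
    qed
    then show "p = q" using p q inj_minimal unfolding L_def by blast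
  qed
  have sub: "\<Phi> ` ?A \<subseteq> (\<Pi>\<^sub>E z\<in>V - {u}. B z)"
  proof
    fix f assume "f \<in> \<Phi> ` ?A"
    then obtain p where p: "p \<in> ?A" and f: "f = \<Phi> p" by auto
    have P: "is_path E src tgt u v p" using p by (simp add: minimal_path_def)
    have pE: "set p \<subseteq> E" using P by (simp add: path_iff)
    have vin: "v \<in> tgt ` set p" using P by (auto simp: path_iff)
    have inB: "L p z \<in> B z" if "z \<in> V - {u}" for z
    proof (cases "L p z")
      case None
      then have "z \<noteq> v" using vin unfolding L_def by (auto simp: map_of_eq_None_iff image_image)
      then show ?thesis using None by (simp add: B_def)
    next
      case (Some c)
      then have "(z, c) \<in> set (map (\<lambda>e. (tgt e, col e)) p)" unfolding L_def by (rule map_of_SomeD)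
      then obtain e where "e \<in> set p" "c = col e" by auto
      then have "c \<in> M" using pE G(2) by auto
      then show ?thesis using Some by (simp add: B_def)
    qed
    show "f \<in> (\<Pi>\<^sub>E z\<in>V - {u}. B z)" unfolding f \<Phi>_def using inB by auto
  qed
  have fin: "finite (\<Pi>\<^sub>E z\<in>V - {u}. B z)"
    using fV fM by (intro finite_PiE) (auto simp: B_def)
  have "card ?A \<le> card (\<Pi>\<^sub>E z\<in>V - {u}. B z)"
    by (rule card_inj_on_le[OF inj sub fin])
  also have "\<dots> = (\<Prod>z\<in>V - {u}. card (B z))" using fV by (intro card_PiE) auto
  also have "\<dots> = card (B v) * (\<Prod>z\<in>V - {u} - {v}. card (B z))"
    using fV assms(5,6) by (intro prod.remove) auto
  also have "(\<Prod>z\<in>V - {u} - {v}. card (B z)) = (\<Prod>z\<in>V - {u} - {v}. card M + 1)"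
  proof (rule prod.cong)
    fix z assume "z \<in> V - {u} - {v}"
    then have "B z = insert None (Some ` M)" by (simp add: B_def)
    moreover have "card (Some ` M) = card M" by (simp add: card_image)
    ultimately show "card (B z) = card M + 1" using fM by simp
  qed simp
  also have "\<dots> = (card M + 1) ^ (card V - 2)"
  proof -
    have "card (V - {u} - {v}) = card V - 2" using fV assms(4,5,6) by (simp add: card_Diff_singleton)
    then show ?thesis by simp
  qed
  also have "card (B v) = card M" by (simp add: B_def card_image)
  finally show ?thesis .
qed

end
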